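(* Let $\kappa,\kappa'$ be two cardinals such that $\kappa\geq 2^{\kappa'}$, and assume $\kappa$ is infinite. Then every functor ${\sf Sets}^{\leq\kappa}_{\neq\emptyset}\to{\sf Sets}^{\leq\kappa'}_{\neq\emptyset}$ and every functor ${\sf Sets}^{\leq\kappa}_{*}\to{\sf Sets}^{\leq\kappa'}_{*}$ is isomorphic to a constant functor.
   Context: For a cardinal $\lambda$, ${\sf Sets}^{\leq\lambda}_{\neq\emptyset}$ denotes the category of non-empty sets of cardinality $\leq\lambda$ with all maps, and ${\sf Sets}^{\leq\lambda}_{*}$ the category of pointed sets of cardinality $\leq\lambda$ with base-point preserving maps. *)

theory Defs
  imports "HOL-Library.FuncSet"
begin

text \<open>Category Sets^{<=K}_{nonempty}, modelled (up to equivalence of categories) by the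
  full subcategory of nonempty subsets of a fixed carrier K with |K| = kappa.\<close>

definition ne_obj :: "'a set \<Rightarrow> 'a set \<Rightarrow> bool" where
  "ne_obj K X \<longleftrightarrow> X \<noteq> {} \<and> X \<subseteq> K"

definition is_ne_functor ::
  "'a set \<Rightarrow> 'b set \<Rightarrow> ('a set \<Rightarrow> 'b set) \<Rightarrow> ('a set \<Rightarrow> 'a set \<Rightarrow> ('a \<Rightarrow> 'a) \<Rightarrow> ('b \<Rightarrow> 'b)) \<Rightarrow> bool" where
  "is_ne_functor K K' FO FM \<longleftrightarrow>
    (\<forall>X. ne_obj K X \<longrightarrow> ne_obj K' (FO X)) \<and>
    (\<forall>X Y f. ne_obj K X \<and> ne_obj K Y \<and> f \<in> X \<rightarrow>\<^sub>E Y \<longrightarrow> FM X Y f \<in> FO X \<rightarrow>\<^sub>E FO Y) \<and>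
    (\<forall>X. ne_obj K X \<longrightarrow> FM X X (\<lambda>x\<in>X. x) = (\<lambda>y\<in>FO X. y)) \<and>
    (\<forall>X Y Z f g. ne_obj K X \<and> ne_obj K Y \<and> ne_obj K Z \<and> f \<in> X \<rightarrow>\<^sub>E Y \<and> g \<in> Y \<rightarrow>\<^sub>E Z \<longrightarrow>
        FM X Z (compose X g f) = compose (FO X) (FM Y Z g) (FM X Y f))"

definition ne_iso_const ::
  "'a set \<Rightarrow> 'b set \<Rightarrow> ('a set \<Rightarrow> 'b set) \<Rightarrow> ('a set \<Rightarrow> 'a set \<Rightarrow> ('a \<Rightarrow> 'a) \<Rightarrow> ('b \<Rightarrow> 'b)) \<Rightarrow> bool" where
  "ne_iso_const K K' FO FM \<longleftrightarrow>
    (\<exists>C \<eta>. ne_obj K' C \<and>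
      (\<forall>X. ne_obj K X \<longrightarrow> \<eta> X \<in> FO X \<rightarrow>\<^sub>E C \<and> bij_betw (\<eta> X) (FO X) C) \<and>
      (\<forall>X Y f. ne_obj K X \<and> ne_obj K Y \<and> f \<in> X \<rightarrow>\<^sub>E Y \<longrightarrow>
         compose (FO X) (\<eta> Y) (FM X Y f) = compose (FO X) (\<lambda>c\<in>C. c) (\<eta> X)))"

definition pt_obj :: "'a set \<Rightarrow> 'a set \<times> 'a \<Rightarrow> bool" where
  "pt_obj K P \<longleftrightarrow> fst P \<subseteq> K \<and> snd P \<in> fst P"

definition pt_hom :: "'a set \<times> 'a \<Rightarrow> 'a set \<times> 'a \<Rightarrow> ('a \<Rightarrow> 'a) \<Rightarrow> bool" where
  "pt_hom P Q f \<longleftrightarrow> f \<in> fst P \<rightarrow>\<^sub>E fst Q \<and> f (snd P) = snd Q"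

definition is_pt_functor ::
  "'a set \<Rightarrow> 'b set \<Rightarrow> ('a set \<times> 'a \<Rightarrow> 'b set \<times> 'b) \<Rightarrow>
   ('a set \<times> 'a \<Rightarrow> 'a set \<times> 'a \<Rightarrow> ('a \<Rightarrow> 'a) \<Rightarrow> ('b \<Rightarrow> 'b)) \<Rightarrow> bool" where
  "is_pt_functor K K' FO FM \<longleftrightarrow>
    (\<forall>P. pt_obj K P \<longrightarrow> pt_obj K' (FO P)) \<and>
    (\<forall>P Q f. pt_obj K P \<and> pt_obj K Q \<and> pt_hom P Q f \<longrightarrow> pt_hom (FO P) (FO Q) (FM P Q f)) \<and>
    (\<forall>P. pt_obj K P \<longrightarrow> FM P P (\<lambda>x\<in>fst P. x) = (\<lambda>y\<in>fst (FO P). y)) \<and>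
    (\<forall>P Q R f g. pt_obj K P \<and> pt_obj K Q \<and> pt_obj K R \<and> pt_hom P Q f \<and> pt_hom Q R g \<longrightarrow>
        FM P R (compose (fst P) g f) = compose (fst (FO P)) (FM Q R g) (FM P Q f))"

definition pt_iso_const ::
  "'a set \<Rightarrow> 'b set \<Rightarrow> ('a set \<times> 'a \<Rightarrow> 'b set \<times> 'b) \<Rightarrow>
   ('a set \<times> 'a \<Rightarrow> 'a set \<times> 'a \<Rightarrow> ('a \<Rightarrow> 'a) \<Rightarrow> ('b \<Rightarrow> 'b)) \<Rightarrow> bool" where
  "pt_iso_const K K' FO FM \<longleftrightarrow>
    (\<exists>C \<eta>. pt_obj K' C \<and>
      (\<forall>P. pt_obj K P \<longrightarrow> pt_hom (FO P) C (\<eta> P) \<and> bij_betw (\<eta> P) (fst (FO P)) (fst C)) \<and>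
      (\<forall>P Q f. pt_obj K P \<and> pt_obj K Q \<and> pt_hom P Q f \<longrightarrow>
         compose (fst (FO P)) (\<eta> Q) (FM P Q f) = compose (fst (FO P)) (\<lambda>c\<in>fst C. c) (\<eta> P)))"

end

theory Submission
  imports Defs "HOL-Library.Equipollence"
begin

lemma prod_inj: "infinite (K::'a set) \<Longrightarrow> \<exists>b. inj_on b (K\<times>K) \<and> b ` (K\<times>K) \<subseteq> K"
  using card_of_Times_same_infinite[of K] card_of_ordLeq ordIso_iff_ordLeq by blast

lemma wedge:
  fixes K :: "'a set"
  assumes inf: "infinite K" and XK: "X \<subseteq> K" and x0: "x0 \<in> X"
  shows "\<exists>q\<in>K. \<exists>f. (\<forall>i\<in>K. f i \<in> X \<rightarrow>\<^sub>E K \<and> f i x0 = q) \<and>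
     (\<forall>i\<in>K. \<forall>j\<in>K. i \<noteq> j \<longrightarrow> (\<exists>h. h \<in> K \<rightarrow>\<^sub>E X \<and> h q = x0 \<and>
        compose X h (f i) = (\<lambda>x\<in>X. x) \<and> compose X h (f j) = (\<lambda>x\<in>X. x0)))"
proof -
  obtain b where binj: "inj_on b (K\<times>K)" and bK: "b ` (K\<times>K) \<subseteq> K" using prod_inj[OF inf] by blast
  obtain k0 where k0: "k0 \<in> K" using inf infinite_imp_nonempty by blast
  have "K - {k0} \<noteq> {}" using inf by (metis finite.emptyI infinite_remove)
  then obtain k1 where k1: "k1 \<in> K - {k0}" by blast
  have x0K: "x0 \<in> K" using XK x0 by blast
  define q where "q = b (x0, k0)"
  have qK: "q \<in> K" using bK x0K k0 q_def by blast
  define f where "f i = (\<lambda>x\<in>X. if x = x0 then q else b (b (x, i), k1))" for i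
  have bb: "b (b (x, i), k1) \<in> K" if "x \<in> K" "i \<in> K" for x i
    using bK that k1 by blast
  have bbinj: "b (b (x, i), k1) = b (b (x', i'), k1) \<longleftrightarrow> x = x' \<and> i = i'"
    if "x \<in> K" "i \<in> K" "x' \<in> K" "i' \<in> K" for x i x' i'
  proof
    assume eq: "b (b (x, i), k1) = b (b (x', i'), k1)"
    have m1: "b (x, i) \<in> K" "b (x', i') \<in> K" using bK that by auto
    have "(b (x, i), k1) = (b (x', i'), k1)"
      by (rule inj_onD[OF binj eq]) (use m1 k1 in auto)
    then have eq2: "b (x, i) = b (x', i')" by simp
    have "(x, i) = (x', i')"
      by (rule inj_onD[OF binj eq2]) (use that in auto)
    then show "x = x' \<and> i = i'" by simp
  qed simp
  have qne: "b (b (x, i), k1) \<noteq> q" if "x \<in> K" "i \<in> K" for x i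
  proof
    assume "b (b (x, i), k1) = q"
    then have eq: "b (b (x, i), k1) = b (x0, k0)" by (simp add: q_def)
    have m1: "b (x, i) \<in> K" using bK that by auto
    have "(b (x, i), k1) = (x0, k0)"
      by (rule inj_onD[OF binj eq]) (use m1 k1 x0K k0 in auto)
    then show False using k1 by simp
  qed
  have P1: "\<forall>i\<in>K. f i \<in> X \<rightarrow>\<^sub>E K \<and> f i x0 = q"
    using qK bb XK x0 by (auto simp: f_def)
  have P2: "\<exists>h. h \<in> K \<rightarrow>\<^sub>E X \<and> h q = x0 \<and>
        compose X h (f i) = (\<lambda>x\<in>X. x) \<and> compose X h (f j) = (\<lambda>x\<in>X. x0)"
    if i: "i \<in> K" and j: "j \<in> K" and ij: "i \<noteq> j" for i j
  proof -
    define S where "S = (\<lambda>(x, l). b (b (x, l), k1)) ` ((X - {x0}) \<times> (K - {j}))"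
    define h where "h = (\<lambda>z\<in>K. if z \<in> S then fst (inv_into (K\<times>K) b (fst (inv_into (K\<times>K) b z))) else x0)"
    have hval: "h (b (b (x, l), k1)) = (if l \<noteq> j \<and> x \<noteq> x0 then x else x0)" if "x \<in> X" "l \<in> K" for x l
    proof -
      have xK: "x \<in> K" using that XK by blast
      have inS: "b (b (x, l), k1) \<in> S \<longleftrightarrow> l \<noteq> j \<and> x \<noteq> x0"
      proof
        assume "b (b (x, l), k1) \<in> S"
        then obtain x' l' where "x' \<in> X - {x0}" "l' \<in> K - {j}" "b (b (x, l), k1) = b (b (x', l'), k1)"
          by (auto simp: S_def)
        then show "l \<noteq> j \<and> x \<noteq> x0" using bbinj[of x l x' l'] xK that XK by blast
      qed (use that in \<open>auto simp: S_def\<close>)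
      have bxl: "b (x, l) \<in> K" using bK xK that by blast
      have "inv_into (K\<times>K) b (b (b (x, l), k1)) = (b (x, l), k1)"
        using inv_into_f_f[OF binj] bxl k1 by blast
      moreover have "inv_into (K\<times>K) b (b (x, l)) = (x, l)"
        using inv_into_f_f[OF binj] xK that by blast
      ultimately show ?thesis using inS bb[OF xK \<open>l \<in> K\<close>] by (simp add: h_def)
    qed
    have hq: "h q = x0"
    proof -
      have "q \<notin> S"
      proof
        assume "q \<in> S"
        then obtain x l where "x \<in> X - {x0}" "l \<in> K - {j}" "q = b (b (x, l), k1)" by (auto simp: S_def)
        then show False using qne[of x l] XK by auto
      qed
      then show ?thesis using qK by (simp add: h_def)
    qed
    have hE: "h \<in> K \<rightarrow>\<^sub>E X"
    proof -
      have "h z \<in> X" if "z \<in> K" for z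
      proof (cases "z \<in> S")
        case True
        then obtain x l where "x \<in> X - {x0}" "l \<in> K - {j}" "z = b (b (x, l), k1)" by (auto simp: S_def)
        then show ?thesis using hval[of x l] by simp
      next
        case False then show ?thesis using that x0 by (simp add: h_def)
      qed
      then show ?thesis by (auto simp: h_def)
    qed
    have fi: "f l x = (if x = x0 then q else b (b (x, l), k1))" if "x \<in> X" for l x
      using that by (simp add: f_def)
    have c1: "compose X h (f i) = (\<lambda>x\<in>X. x)"
    proof (rule ext)
      fix x show "compose X h (f i) x = (\<lambda>x\<in>X. x) x"
      proof (cases "x \<in> X")
        case True then show ?thesis
          using hq hval[of x i] i ij by (simp add: compose_def fi)
      qed (simp add: compose_def)
    qed
    have c2: "compose X h (f j) = (\<lambda>x\<in>X. x0)"
    proof (rule ext)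
      fix x show "compose X h (f j) x = (\<lambda>x\<in>X. x0) x"
      proof (cases "x \<in> X")
        case True then show ?thesis
          using hq hval[of x j] j by (simp add: compose_def fi)
      qed (simp add: compose_def)
    qed
    show ?thesis using hE hq c1 c2 by blast
  qed
  show ?thesis using qK P1 P2 by blast
qed

lemma ne_fix:
  fixes K :: "'a set" and K' :: "'b set"
  assumes inf: "infinite K" and noinj: "\<not> (\<exists>g. inj_on g K \<and> g ` K \<subseteq> K')"
    and F: "is_ne_functor K K' FO FM" and X: "ne_obj K X" and x0: "x0 \<in> X" and y: "y \<in> FO X"
  shows "FM X X (\<lambda>x\<in>X. x0) y = y"
proof (rule ccontr)
  note Fs = F[unfolded is_ne_functor_def]
  note F1 = conjunct1[OF Fs, rule_format]
  note F2 = conjunct1[OF conjunct2[OF Fs], rule_format]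
  note F3 = conjunct1[OF conjunct2[OF conjunct2[OF Fs]], rule_format]
  note F4 = conjunct2[OF conjunct2[OF conjunct2[OF Fs]], rule_format]
  assume ne: "FM X X (\<lambda>x\<in>X. x0) y \<noteq> y"
  have XK: "X \<subseteq> K" using X by (simp add: ne_obj_def)
  have Kobj: "ne_obj K K" using inf by (auto simp: ne_obj_def)
  obtain q f where qK: "q \<in> K" and fE: "\<forall>i\<in>K. f i \<in> X \<rightarrow>\<^sub>E K \<and> f i x0 = q"
    and hs: "\<forall>i\<in>K. \<forall>j\<in>K. i \<noteq> j \<longrightarrow> (\<exists>h. h \<in> K \<rightarrow>\<^sub>E X \<and> h q = x0 \<and>
        compose X h (f i) = (\<lambda>x\<in>X. x) \<and> compose X h (f j) = (\<lambda>x\<in>X. x0))"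
    using wedge[OF inf XK x0] by blast
  have comp: "FM X X (compose X h (f i)) y = FM K X h (FM X K (f i) y)"
    if "i \<in> K" "h \<in> K \<rightarrow>\<^sub>E X" for h i
  proof -
    have "FM X X (compose X h (f i)) = compose (FO X) (FM K X h) (FM X K (f i))"
      using fE that by (intro F4) (auto simp: X Kobj)
    then show ?thesis using y by (simp add: compose_def)
  qed
  have idX: "FM X X (\<lambda>x\<in>X. x) y = y" using F3[OF X] y by simp
  have "inj_on (\<lambda>i. FM X K (f i) y) K"
  proof (rule inj_onI, rule ccontr)
    fix i j assume i: "i \<in> K" and j: "j \<in> K" and eq: "FM X K (f i) y = FM X K (f j) y" and ij: "i \<noteq> j"
    then obtain h where h: "h \<in> K \<rightarrow>\<^sub>E X" "compose X h (f i) = (\<lambda>x\<in>X. x)"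
        "compose X h (f j) = (\<lambda>x\<in>X. x0)" using hs by blast
    have "y = FM K X h (FM X K (f i) y)" using comp[OF i h(1)] h(2) idX by simp
    also have "\<dots> = FM K X h (FM X K (f j) y)" using eq by simp
    also have "\<dots> = FM X X (\<lambda>x\<in>X. x0) y" using comp[OF j h(1)] h(3) by simp
    finally show False using ne by simp
  qed
  moreover have "(\<lambda>i. FM X K (f i) y) ` K \<subseteq> K'"
  proof
    fix z assume "z \<in> (\<lambda>i. FM X K (f i) y) ` K"
    then obtain i where i: "i \<in> K" and z: "z = FM X K (f i) y" by blast
    have "FM X K (f i) \<in> FO X \<rightarrow>\<^sub>E FO K" using fE i by (intro F2) (auto simp: X Kobj)
    then have "z \<in> FO K" using y z by auto
    moreover have "FO K \<subseteq> K'" using F1[OF Kobj] by (simp add: ne_obj_def)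
    ultimately show "z \<in> K'" by blast
  qed
  ultimately show False using noinj by blast
qed

lemma pt_fix:
  fixes K :: "'a set" and K' :: "'b set"
  assumes inf: "infinite K" and noinj: "\<not> (\<exists>g. inj_on g K \<and> g ` K \<subseteq> K')"
    and F: "is_pt_functor K K' FO FM" and P: "pt_obj K P" and y: "y \<in> fst (FO P)"
  shows "FM P P (\<lambda>x\<in>fst P. snd P) y = y"
proof (rule ccontr)
  note Fs = F[unfolded is_pt_functor_def]
  note F1 = conjunct1[OF Fs, rule_format]
  note F2 = conjunct1[OF conjunct2[OF Fs], rule_format]
  note F3 = conjunct1[OF conjunct2[OF conjunct2[OF Fs]], rule_format]
  note F4 = conjunct2[OF conjunct2[OF conjunct2[OF Fs]], rule_format]
  define X where "X = fst P"
  define x0 where "x0 = snd P"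
  have Peq: "P = (X, x0)" by (simp add: X_def x0_def)
  assume ne: "FM P P (\<lambda>x\<in>fst P. snd P) y \<noteq> y"
  have XK: "X \<subseteq> K" and x0: "x0 \<in> X" using P by (auto simp: pt_obj_def X_def x0_def)
  obtain q f where qK: "q \<in> K" and fE: "\<forall>i\<in>K. f i \<in> X \<rightarrow>\<^sub>E K \<and> f i x0 = q"
    and hs: "\<forall>i\<in>K. \<forall>j\<in>K. i \<noteq> j \<longrightarrow> (\<exists>h. h \<in> K \<rightarrow>\<^sub>E X \<and> h q = x0 \<and>
        compose X h (f i) = (\<lambda>x\<in>X. x) \<and> compose X h (f j) = (\<lambda>x\<in>X. x0))"
    using wedge[OF inf XK x0] by blast
  define Q where "Q = (K, q)"
  have Qobj: "pt_obj K Q" using qK by (simp add: pt_obj_def Q_def)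
  have fh: "pt_hom P Q (f i)" if "i \<in> K" for i using fE that by (simp add: pt_hom_def Peq Q_def)
  have comp: "FM P P (compose X h (f i)) y = FM Q P h (FM P Q (f i) y)"
    if "i \<in> K" "h \<in> K \<rightarrow>\<^sub>E X" "h q = x0" for h i
  proof -
    have "pt_hom Q P h" using that by (simp add: pt_hom_def Peq Q_def)
    then have "FM P P (compose (fst P) h (f i)) = compose (fst (FO P)) (FM Q P h) (FM P Q (f i))"
      using fh[OF that(1)] \<open>pt_hom Q P h\<close> by (intro F4) (auto simp: P Qobj)
    then show ?thesis using y by (simp add: compose_def X_def)
  qed
  have "FM P P (\<lambda>x\<in>fst P. x) = (\<lambda>y\<in>fst (FO P). y)" using F3[OF P] .
  then have idX: "FM P P (\<lambda>x\<in>X. x) y = y" using y by (simp add: X_def)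
  have "inj_on (\<lambda>i. FM P Q (f i) y) K"
  proof (rule inj_onI, rule ccontr)
    fix i j assume i: "i \<in> K" and j: "j \<in> K" and eq: "FM P Q (f i) y = FM P Q (f j) y" and ij: "i \<noteq> j"
    then obtain h where h: "h \<in> K \<rightarrow>\<^sub>E X" "h q = x0" "compose X h (f i) = (\<lambda>x\<in>X. x)"
        "compose X h (f j) = (\<lambda>x\<in>X. x0)" using hs by blast
    have "y = FM Q P h (FM P Q (f i) y)" using comp[OF i h(1,2)] h(3) idX by simp
    also have "\<dots> = FM Q P h (FM P Q (f j) y)" using eq by simp
    also have "\<dots> = FM P P (\<lambda>x\<in>X. x0) y" using comp[OF j h(1,2)] h(4) by simp
    finally show False using ne by (simp add: X_def x0_def)
  qed
  moreover have "(\<lambda>i. FM P Q (f i) y) ` K \<subseteq> K'"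
  proof
    fix z assume "z \<in> (\<lambda>i. FM P Q (f i) y) ` K"
    then obtain i where i: "i \<in> K" and z: "z = FM P Q (f i) y" by blast
    have "pt_hom (FO P) (FO Q) (FM P Q (f i))" using fh[OF i] by (intro F2) (auto simp: P Qobj)
    then have "z \<in> fst (FO Q)" using y z by (auto simp: pt_hom_def)
    moreover have "fst (FO Q) \<subseteq> K'" using F1[OF Qobj] by (simp add: pt_obj_def)
    ultimately show "z \<in> K'" by blast
  qed
  ultimately show False using noinj by blast
qed

lemma noinj: assumes "\<exists>e. inj_on e (Pow K') \<and> e ` Pow K' \<subseteq> K" shows "\<not> (\<exists>g. inj_on g K \<and> g ` K \<subseteq> K')"
proof
  assume "\<exists>g. inj_on g K \<and> g ` K \<subseteq> K'"
  then have "K \<lesssim> K'" by (simp add: lepoll_def)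
  moreover have "Pow K' \<lesssim> K" using assms by (simp add: lepoll_def)
  ultimately have "Pow K' \<lesssim> K'" using lepoll_trans by blast
  then show False using lesspoll_Pow_self[of K'] 
    by (meson lepoll_antisym lesspoll_def)
qed

lemma compose_id_PiE:
  assumes g: "g \<in> A \<rightarrow>\<^sub>E C" shows "compose A (\<lambda>c\<in>C. c) g = g"
proof (rule ext)
  fix x
  show "compose A (\<lambda>c\<in>C. c) g x = g x"
  proof (cases "x \<in> A")
    case True then have "g x \<in> C" using g by auto
    then show ?thesis using True by (simp add: compose_def)
  next
    case False
    then have "g x = undefined" using PiE_arb[OF g] by blast
    then show ?thesis using False by (simp add: compose_def)
  qed
qed


lemma ne_part:
  fixes K :: "'a set" and K' :: "'b set"
  assumes inf: "infinite K" and noinj: "\<not> (\<exists>g. inj_on g K \<and> g ` K \<subseteq> K')"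
    and F: "is_ne_functor K K' FO FM"
  shows "ne_iso_const K K' FO FM"
proof -
  note Fs = F[unfolded is_ne_functor_def]
  note F1 = conjunct1[OF Fs, rule_format]
  note F2 = conjunct1[OF conjunct2[OF Fs], rule_format]
  note F3 = conjunct1[OF conjunct2[OF conjunct2[OF Fs]], rule_format]
  note F4 = conjunct2[OF conjunct2[OF conjunct2[OF Fs]], rule_format]
  obtain p where p: "p \<in> K" using inf infinite_imp_nonempty by blast
  define Pt where "Pt = {p}"
  have Oobj: "ne_obj K Pt" using p by (simp add: ne_obj_def Pt_def)
  have pPt: "p \<in> Pt" by (simp add: Pt_def)
  define C where "C = FO Pt"
  define \<eta> where "\<eta> X = FM X Pt (\<lambda>x\<in>X. p)" for X
  have tE: "(\<lambda>x\<in>X. p) \<in> X \<rightarrow>\<^sub>E Pt" for X by (auto simp: Pt_def)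
  have etaE: "\<eta> X \<in> FO X \<rightarrow>\<^sub>E C" if X: "ne_obj K X" for X
    unfolding \<eta>_def C_def using tE[of X] by (intro F2) (auto simp: X Oobj pPt)
  have bij: "bij_betw (\<eta> X) (FO X) C" if X: "ne_obj K X" for X
  proof -
    obtain x0 where x0: "x0 \<in> X" using X by (auto simp: ne_obj_def)
    define s where "s = (\<lambda>z\<in>Pt. x0)"
    have sE: "s \<in> Pt \<rightarrow>\<^sub>E X" using x0 by (auto simp: s_def)
    have ts: "compose Pt (\<lambda>x\<in>X. p) s = (\<lambda>z\<in>Pt. z)"
      by (rule ext) (auto simp: compose_def s_def Pt_def x0)
    have st: "compose X s (\<lambda>x\<in>X. p) = (\<lambda>x\<in>X. x0)"
      by (rule ext) (auto simp: compose_def s_def Pt_def)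
    have sE': "FM Pt X s \<in> C \<rightarrow>\<^sub>E FO X" unfolding C_def using sE by (intro F2) (auto simp: X Oobj pPt)
    have inj: "inj_on (\<eta> X) (FO X)"
    proof (rule inj_onI)
      fix y1 y2 assume y1: "y1 \<in> FO X" and y2: "y2 \<in> FO X" and eq: "\<eta> X y1 = \<eta> X y2"
      have c: "FM Pt X s (\<eta> X y) = y" if y: "y \<in> FO X" for y
      proof -
        have "FM X X (compose X s (\<lambda>x\<in>X. p)) = compose (FO X) (FM Pt X s) (FM X Pt (\<lambda>x\<in>X. p))"
          using tE sE by (intro F4) (auto simp: X Oobj pPt)
        then have "FM Pt X s (\<eta> X y) = FM X X (\<lambda>x\<in>X. x0) y" using y st by (simp add: compose_def \<eta>_def)
        also have "\<dots> = y" using ne_fix[OF inf noinj F X x0 y] .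
        finally show ?thesis .
      qed
      show "y1 = y2" using c[OF y1] c[OF y2] eq by metis
    qed
    have surj: "\<eta> X ` FO X = C"
    proof
      show "\<eta> X ` FO X \<subseteq> C" using etaE[OF X] by auto
      show "C \<subseteq> \<eta> X ` FO X"
      proof
        fix c assume c: "c \<in> C"
        have "FM Pt Pt (compose Pt (\<lambda>x\<in>X. p) s) = compose (FO Pt) (FM X Pt (\<lambda>x\<in>X. p)) (FM Pt X s)"
          using tE sE by (intro F4) (auto simp: X Oobj pPt)
        then have "\<eta> X (FM Pt X s c) = FM Pt Pt (\<lambda>z\<in>Pt. z) c" using c ts by (simp add: compose_def \<eta>_def C_def)
        also have "\<dots> = c" using F3[OF Oobj] c by (simp add: C_def)
        finally have "c = \<eta> X (FM Pt X s c)" by simp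
        moreover have "FM Pt X s c \<in> FO X" using sE' c by auto
        ultimately show "c \<in> \<eta> X ` FO X" by blast
      qed
    qed
    show ?thesis using inj surj by (simp add: bij_betw_def)
  qed
  have nat: "compose (FO X) (\<eta> Y) (FM X Y f) = compose (FO X) (\<lambda>c\<in>C. c) (\<eta> X)"
    if X: "ne_obj K X" and Y: "ne_obj K Y" and f: "f \<in> X \<rightarrow>\<^sub>E Y" for X Y f
  proof -
    have "compose X (\<lambda>y\<in>Y. p) f = (\<lambda>x\<in>X. p)"
      using f by (intro ext) (auto simp: compose_def)
    moreover have "FM X Pt (compose X (\<lambda>y\<in>Y. p) f) = compose (FO X) (FM Y Pt (\<lambda>y\<in>Y. p)) (FM X Y f)"
      using tE f by (intro F4) (auto simp: X Y Oobj pPt)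
    ultimately have "compose (FO X) (\<eta> Y) (FM X Y f) = \<eta> X" by (simp add: \<eta>_def)
    also have "\<dots> = compose (FO X) (\<lambda>c\<in>C. c) (\<eta> X)"
      using compose_id_PiE[OF etaE[OF X]] by simp
    finally show ?thesis .
  qed
  have "ne_obj K' C" using F1[OF Oobj] by (simp add: C_def)
  then show ?thesis unfolding ne_iso_const_def
    apply (rule_tac x=C in exI, rule_tac x=\<eta> in exI)
    using etaE bij nat by simp
qed

lemma pt_part:
  fixes K :: "'a set" and K' :: "'b set"
  assumes inf: "infinite K" and noinj: "\<not> (\<exists>g. inj_on g K \<and> g ` K \<subseteq> K')"
    and F: "is_pt_functor K K' FO FM"
  shows "pt_iso_const K K' FO FM"
proof -
  note Fs = F[unfolded is_pt_functor_def]
  note F1 = conjunct1[OF Fs, rule_format]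
  note F2 = conjunct1[OF conjunct2[OF Fs], rule_format]
  note F3 = conjunct1[OF conjunct2[OF conjunct2[OF Fs]], rule_format]
  note F4 = conjunct2[OF conjunct2[OF conjunct2[OF Fs]], rule_format]
  obtain p where p: "p \<in> K" using inf infinite_imp_nonempty by blast
  define Pt where "Pt = ({p}, p)"
  have Oobj: "pt_obj K Pt" using p by (simp add: pt_obj_def Pt_def)
  define C where "C = FO Pt"
  define \<eta> where "\<eta> P = FM P Pt (\<lambda>x\<in>fst P. p)" for P
  have tE: "pt_hom P Pt (\<lambda>x\<in>fst P. p)" if "pt_obj K P" for P
    using that by (auto simp: Pt_def pt_hom_def pt_obj_def)
  have etaE: "pt_hom (FO P) C (\<eta> P)" if X: "pt_obj K P" for P
    unfolding \<eta>_def C_def using tE[OF X] by (intro F2) (auto simp: X Oobj)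
  have bij: "bij_betw (\<eta> P) (fst (FO P)) (fst C)" if X: "pt_obj K P" for P
  proof -
    define x0 where "x0 = snd P"
    have x0: "x0 \<in> fst P" using X by (simp add: pt_obj_def x0_def)
    define s where "s = (\<lambda>z\<in>fst Pt. x0)"
    have sE: "pt_hom Pt P s" using x0 by (auto simp: s_def Pt_def pt_hom_def x0_def)
    have ts: "compose (fst Pt) (\<lambda>x\<in>fst P. p) s = (\<lambda>z\<in>fst Pt. z)"
      by (rule ext) (auto simp: compose_def s_def Pt_def x0)
    have st: "compose (fst P) s (\<lambda>x\<in>fst P. p) = (\<lambda>x\<in>fst P. snd P)"
      by (rule ext) (auto simp: compose_def s_def Pt_def x0_def)
    have sE': "pt_hom C (FO P) (FM Pt P s)" unfolding C_def using sE by (intro F2) (auto simp: X Oobj)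
    have inj: "inj_on (\<eta> P) (fst (FO P))"
    proof (rule inj_onI)
      fix y1 y2 assume y1: "y1 \<in> fst (FO P)" and y2: "y2 \<in> fst (FO P)" and eq: "\<eta> P y1 = \<eta> P y2"
      have c: "FM Pt P s (\<eta> P y) = y" if y: "y \<in> fst (FO P)" for y
      proof -
        have "FM P P (compose (fst P) s (\<lambda>x\<in>fst P. p)) = compose (fst (FO P)) (FM Pt P s) (FM P Pt (\<lambda>x\<in>fst P. p))"
          using tE[OF X] sE by (intro F4) (auto simp: X Oobj)
        then have "FM Pt P s (\<eta> P y) = FM P P (\<lambda>x\<in>fst P. snd P) y" using y st by (simp add: compose_def \<eta>_def)
        also have "\<dots> = y" using pt_fix[OF inf noinj F X y] .
        finally show ?thesis .
      qed
      show "y1 = y2" using c[OF y1] c[OF y2] eq by metis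
    qed
    have surj: "\<eta> P ` fst (FO P) = fst C"
    proof
      show "\<eta> P ` fst (FO P) \<subseteq> fst C" using etaE[OF X] by (auto simp: pt_hom_def)
      show "fst C \<subseteq> \<eta> P ` fst (FO P)"
      proof
        fix c assume c: "c \<in> fst C"
        have "FM Pt Pt (compose (fst Pt) (\<lambda>x\<in>fst P. p) s) = compose (fst (FO Pt)) (FM P Pt (\<lambda>x\<in>fst P. p)) (FM Pt P s)"
          using tE[OF X] sE by (intro F4) (auto simp: X Oobj)
        then have "\<eta> P (FM Pt P s c) = FM Pt Pt (\<lambda>z\<in>fst Pt. z) c" using c ts by (simp add: compose_def \<eta>_def C_def)
        also have "\<dots> = c" using F3[OF Oobj] c by (simp add: C_def)
        finally have "c = \<eta> P (FM Pt P s c)" by simp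
        moreover have "FM Pt P s c \<in> fst (FO P)" using sE' c by (auto simp: pt_hom_def)
        ultimately show "c \<in> \<eta> P ` fst (FO P)" by blast
      qed
    qed
    show ?thesis using inj surj by (simp add: bij_betw_def)
  qed
  have nat: "compose (fst (FO P)) (\<eta> Q) (FM P Q f) = compose (fst (FO P)) (\<lambda>c\<in>fst C. c) (\<eta> P)"
    if X: "pt_obj K P" and Y: "pt_obj K Q" and f: "pt_hom P Q f" for P Q f
  proof -
    have "compose (fst P) (\<lambda>y\<in>fst Q. p) f = (\<lambda>x\<in>fst P. p)"
      using f by (intro ext) (auto simp: compose_def pt_hom_def)
    moreover have "FM P Pt (compose (fst P) (\<lambda>y\<in>fst Q. p) f) = compose (fst (FO P)) (FM Q Pt (\<lambda>y\<in>fst Q. p)) (FM P Q f)"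
      using tE[OF Y] f by (intro F4) (auto simp: X Y Oobj)
    ultimately have "compose (fst (FO P)) (\<eta> Q) (FM P Q f) = \<eta> P" by (simp add: \<eta>_def)
    also have "\<dots> = compose (fst (FO P)) (\<lambda>c\<in>fst C. c) (\<eta> P)"
      using compose_id_PiE[of "\<eta> P" "fst (FO P)" "fst C"] etaE[OF X] by (simp add: pt_hom_def)
    finally show ?thesis .
  qed
  have "pt_obj K' C" using F1[OF Oobj] by (simp add: C_def)
  then show ?thesis unfolding pt_iso_const_def
    apply (rule_tac x=C in exI, rule_tac x=\<eta> in exI)
    using etaE bij nat by simp
qed

theorem proposition2p10:
  fixes K :: "'a set" and K' :: "'b set"
  assumes "infinite K"
    and "\<exists>e. inj_on e (Pow K') \<and> e ` Pow K' \<subseteq> K"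
  shows "(\<forall>FO FM. is_ne_functor K K' FO FM \<longrightarrow> ne_iso_const K K' FO FM) \<and>
         (\<forall>FO FM. is_pt_functor K K' FO FM \<longrightarrow> pt_iso_const K K' FO FM)"
  using ne_part[OF assms(1) noinj[OF assms(2)]] pt_part[OF assms(1) noinj[OF assms(2)]] by blast

end
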